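(* Let $m\ge 3$ and $H=\Theta(l_1,\ldots,l_m)$ with $l_1\ge 2$ and $l_2\ge 4$, and let $G=H^2$. Then $G$ is equitably $k$-choosable for every $k\ge 2m+2$.
   Context: All graphs are finite and simple. $\Theta(l_1,\ldots,l_m)$, with $l_1\le\cdots\le l_m$, denotes the graph consisting of two vertices $u,w$ joined by $m$ internally disjoint paths of lengths $l_1,\ldots,l_m$; the $i$th path is $u, v_{i,1},\ldots,v_{i,l_i-1}, w$. For a graph $H$, $H^2$ has vertex set $V(H)$ with two vertices adjacent iff their distance in $H$ is 1 or 2. A $k$-assignment $L$ assigns to each vertex a set of exactly $k$ colors; an equitable $L$-coloring of $G$ is a proper coloring $f$ with $f(v)\in L(v)$ such that no color is used more than $\lceil |V(G)|/k\rceil$ times; $G$ is equitably $k$-choosable if it has an equitable $L$-coloring for every $k$-assignment $L$. *)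

theory Defs
  imports Complex_Main
begin

text \<open>Vertices of the theta graph: the two poles u, w and the internal
  vertices v_{i,j} of the i-th path (paths indexed 0..m-1 here).\<close>
datatype thv = U | W | Vx nat nat

definition theta_verts :: "nat list \<Rightarrow> thv set" where
  "theta_verts l = {U, W} \<union> {Vx i j | i j. i < length l \<and> 1 \<le> j \<and> j < l ! i}"

definition theta_pt :: "nat list \<Rightarrow> nat \<Rightarrow> nat \<Rightarrow> thv" where
  "theta_pt l i j = (if j = 0 then U else if j = l ! i then W else Vx i j)"

definition theta_adj :: "nat list \<Rightarrow> thv \<Rightarrow> thv \<Rightarrow> bool" where
  "theta_adj l x y = (\<exists>i < length l. \<exists>j < l ! i.
      (x = theta_pt l i j \<and> y = theta_pt l i (Suc j)) \<or>
      (y = theta_pt l i j \<and> x = theta_pt l i (Suc j)))"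

definition graph_sq :: "('a \<Rightarrow> 'a \<Rightarrow> bool) \<Rightarrow> 'a \<Rightarrow> 'a \<Rightarrow> bool" where
  "graph_sq E x y = (x \<noteq> y \<and> (E x y \<or> (\<exists>z. E x z \<and> E z y)))"

definition k_assignment :: "'a set \<Rightarrow> nat \<Rightarrow> ('a \<Rightarrow> 'c set) \<Rightarrow> bool" where
  "k_assignment V k L = (\<forall>v \<in> V. finite (L v) \<and> card (L v) = k)"

definition equitable_L_coloring ::
  "'a set \<Rightarrow> ('a \<Rightarrow> 'a \<Rightarrow> bool) \<Rightarrow> nat \<Rightarrow> ('a \<Rightarrow> 'c set) \<Rightarrow> ('a \<Rightarrow> 'c) \<Rightarrow> bool" where
  "equitable_L_coloring V E k L f =
     ((\<forall>v \<in> V. f v \<in> L v) \<and>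
      (\<forall>x \<in> V. \<forall>y \<in> V. E x y \<longrightarrow> f x \<noteq> f y) \<and>
      (\<forall>c. card {v \<in> V. f v = c} \<le> nat \<lceil>real (card V) / real k\<rceil>))"

end

theory Submission
  imports Defs "HOL-Library.Product_Lexorder"
begin



lemma greedy_col:
  fixes V :: "'a set" and key :: "'a \<Rightarrow> 'b::linorder" and part :: "'a \<Rightarrow> nat"
    and L :: "'a \<Rightarrow> 'c set"
  assumes finV: "finite V" and kpos: "0 < k"
    and La: "k_assignment V k L"
    and inj: "inj_on key V"
    and irr: "\<And>x. \<not> E x x"
    and cond: "\<And>v. v \<in> V \<Longrightarrow> card {w\<in>V. key w < key v \<and> (E w v \<or> E v w \<or> part w = part v)} < k"
    and pT: "\<And>v. v \<in> V \<Longrightarrow> part v < T"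
    and Tle: "T \<le> nat \<lceil>real (card V) / real k\<rceil>"
  shows "\<exists>f. equitable_L_coloring V E k L f"
proof -
  define good where "good S f \<longleftrightarrow> (\<forall>v\<in>S. f v \<in> L v) \<and>
     (\<forall>x\<in>S. \<forall>y\<in>S. x \<noteq> y \<and> (E x y \<or> part x = part y) \<longrightarrow> f x \<noteq> f y)" for S and f :: "'a \<Rightarrow> 'c"
  have main: "\<forall>S. S \<subseteq> V \<and> card S = n \<and> (\<forall>x\<in>S. \<forall>y\<in>V. key y < key x \<longrightarrow> y \<in> S) \<longrightarrow> (\<exists>f. good S f)" for n
  proof (induction n)
    case 0
    show ?case
    proof (intro allI impI)
      fix S assume "S \<subseteq> V \<and> card S = 0 \<and> (\<forall>x\<in>S. \<forall>y\<in>V. key y < key x \<longrightarrow> y \<in> S)"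
      then have "S = {}" using finV by (meson card_0_eq finite_subset)
      then show "\<exists>f. good S f" unfolding good_def by auto
    qed
  next
    case (Suc n)
    show ?case
    proof (intro allI impI)
      fix S assume S: "S \<subseteq> V \<and> card S = Suc n \<and> (\<forall>x\<in>S. \<forall>y\<in>V. key y < key x \<longrightarrow> y \<in> S)"
      have finS: "finite S" using S finV finite_subset by auto
      have ne: "S \<noteq> {}" using S by auto
      have "Max (key ` S) \<in> key ` S" using finS ne by simp
      then obtain v where vS: "v \<in> S" and vmax: "key v = Max (key ` S)" by auto
      have vmax': "\<And>u. u \<in> S \<Longrightarrow> key u \<le> key v" using vmax finS by simp
      define S' where "S' = S - {v}"
      have S'c: "S' \<subseteq> V \<and> card S' = n \<and> (\<forall>x\<in>S'. \<forall>y\<in>V. key y < key x \<longrightarrow> y \<in> S')"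
      proof (intro conjI ballI impI)
        show "S' \<subseteq> V" using S S'_def by auto
        show "card S' = n" using S vS finS S'_def by auto
      next
        fix x y assume xS: "x \<in> S'" and yV: "y \<in> V" and lt: "key y < key x"
        have "y \<in> S" using S xS yV lt S'_def by auto
        moreover have "key x \<le> key v" using xS vmax' S'_def by auto
        ultimately show "y \<in> S'" using lt S'_def by auto
      qed
      obtain f where gf: "good S' f" using Suc.IH S'c by blast
      define D where "D = {w\<in>V. key w < key v \<and> (E w v \<or> E v w \<or> part w = part v)}"
      have vV: "v \<in> V" using S vS by auto
      have cD: "card D < k" using cond[OF vV] D_def by simp
      have finL: "finite (L v)" and cL: "card (L v) = k" using La vV unfolding k_assignment_def by auto
      have finD: "finite D" using finV D_def by simp
      have "card (f ` D) < k" using cD card_image_le[OF finD, of f] by linarith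
      then have "\<not> L v \<subseteq> f ` D" using cL card_mono[OF finite_imageI[OF finD], of "L v" f] by linarith
      then obtain c where cL: "c \<in> L v" and cnD: "c \<notin> f ` D" by auto
      define f' where "f' = f(v := c)"
      have "good S f'"
        unfolding good_def
      proof (intro conjI ballI impI)
        fix u assume "u \<in> S"
        then show "f' u \<in> L u" using gf cL unfolding good_def f'_def S'_def by auto
      next
        fix x y assume xS: "x \<in> S" and yS: "y \<in> S" and rel: "x \<noteq> y \<and> (E x y \<or> part x = part y)"
        show "f' x \<noteq> f' y"
        proof (cases "x = v \<or> y = v")
          case False
          then show ?thesis using gf xS yS rel unfolding good_def f'_def S'_def by auto
        next
          case True
          then show ?thesis
          proof
            assume xv: "x = v"
            have yV: "y \<in> V" using S yS by auto
            have "key y \<noteq> key v" using inj yV vV rel xv unfolding inj_on_def by auto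
            then have "key y < key v" using vmax' yS by force
            then have "y \<in> D" using yV rel xv D_def by auto
            then show ?thesis using cnD xv rel f'_def by auto
          next
            assume yv: "y = v"
            have xV: "x \<in> V" using S xS by auto
            have "key x \<noteq> key v" using inj xV vV rel yv unfolding inj_on_def by auto
            then have "key x < key v" using vmax' xS by force
            then have "x \<in> D" using xV rel yv D_def by auto
            then show ?thesis using cnD yv rel f'_def by auto
          qed
        qed
      qed
      then show "\<exists>f. good S f" by blast
    qed
  qed
  obtain f where gf: "good V f" using main[of "card V"] by blast
  have "equitable_L_coloring V E k L f"
    unfolding equitable_L_coloring_def
  proof (intro conjI ballI allI impI)
    fix v assume "v \<in> V" then show "f v \<in> L v" using gf good_def by auto
  next
    fix x y assume "x \<in> V" "y \<in> V" "E x y"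
    moreover have "x \<noteq> y" using irr \<open>E x y\<close> by auto
    ultimately show "f x \<noteq> f y" using gf good_def by auto
  next
    fix c
    let ?A = "{v \<in> V. f v = c}"
    have "inj_on part ?A"
    proof (rule inj_onI)
      fix x y assume "x \<in> ?A" "y \<in> ?A" "part x = part y"
      then show "x = y" using gf unfolding good_def by force
    qed
    moreover have "part ` ?A \<subseteq> {..<T}" using pT by auto
    ultimately have "card ?A \<le> card {..<T}" by (meson card_inj_on_le finite_lessThan)
    then show "card ?A \<le> nat \<lceil>real (card V) / real k\<rceil>" using Tle by simp
  qed
  then show ?thesis by blast
qed




lemma pt_simps:
  "theta_pt l i 0 = U"
  "j \<noteq> 0 \<Longrightarrow> j = l!i \<Longrightarrow> theta_pt l i j = W"
  "j \<noteq> 0 \<Longrightarrow> j \<noteq> l!i \<Longrightarrow> theta_pt l i j = Vx i j"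
  by (auto simp: theta_pt_def)

lemma pt_eq_U: "theta_pt l i j = U \<longleftrightarrow> j = 0" by (auto simp: theta_pt_def)
lemma pt_eq_W: "theta_pt l i j = W \<longleftrightarrow> j \<noteq> 0 \<and> j = l!i" by (auto simp: theta_pt_def)
lemma pt_eq_Vx: "theta_pt l i j = Vx a b \<longleftrightarrow> j \<noteq> 0 \<and> j \<noteq> l!i \<and> a = i \<and> b = j"
  by (auto simp: theta_pt_def)

lemma adj_sym: "theta_adj l x y \<Longrightarrow> theta_adj l y x"
  unfolding theta_adj_def by blast

lemma adj_Vx: "theta_adj l (Vx a b) z \<Longrightarrow> a < length l \<and> ((1 \<le> b \<and> z = theta_pt l a (b-1)) \<or> z = theta_pt l a (Suc b))"
  unfolding theta_adj_def
  by (auto simp: pt_eq_Vx[symmetric] theta_pt_def split: if_splits)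

lemma adj_U: "theta_adj l U z \<Longrightarrow> \<exists>i<length l. z = theta_pt l i 1 \<and> 0 < l!i"
  unfolding theta_adj_def
  by (auto simp: theta_pt_def split: if_splits)

lemma adj_W: "theta_adj l W z \<Longrightarrow> \<exists>i<length l. z = theta_pt l i (l!i - 1) \<and> 0 < l!i"
proof -
  assume "theta_adj l W z"
  then obtain i j where ij: "i < length l" "j < l!i"
    "(W = theta_pt l i j \<and> z = theta_pt l i (Suc j)) \<or> (z = theta_pt l i j \<and> W = theta_pt l i (Suc j))"
    unfolding theta_adj_def by blast
  then have "z = theta_pt l i j \<and> Suc j = l!i" by (auto simp: pt_eq_W[where l=l] theta_pt_def split: if_splits)
  then have "z = theta_pt l i (l!i - 1)" "0 < l!i" by (metis diff_Suc_1, linarith)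
  then show ?thesis using ij(1) by blast
qed

lemma sq_sym: "graph_sq (theta_adj l) x y \<Longrightarrow> graph_sq (theta_adj l) y x"
  unfolding graph_sq_def using adj_sym by blast

lemma sq_irr: "\<not> graph_sq E x x" unfolding graph_sq_def by auto




locale TH =
  fixes l :: "nat list" and k :: nat
  assumes m3: "length l \<ge> 3" and srt: "sorted l" and l0: "l!0 \<ge> 2" and l1: "l!1 \<ge> 4"
    and kb: "k \<ge> 2 * length l + 2"
begin

abbreviation "m \<equiv> length l"
abbreviation "pt \<equiv> theta_pt l"
abbreviation "G \<equiv> graph_sq (theta_adj l)"
abbreviation "V \<equiv> theta_verts l"

lemma lge2: "i < m \<Longrightarrow> l!i \<ge> 2"
  using sorted_nth_mono[OF srt, of 0 i] l0 by auto

lemma lge4: "i < m \<Longrightarrow> 1 \<le> i \<Longrightarrow> l!i \<ge> 4"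
  using sorted_nth_mono[OF srt, of 1 i] l1 by auto

lemma lmax: "i < m \<Longrightarrow> l!i \<le> l!(m-1)"
  using sorted_nth_mono[OF srt, of i "m-1"] by auto

lemma lmono: "i \<le> j \<Longrightarrow> j < m \<Longrightarrow> l!i \<le> l!j"
  using sorted_nth_mono[OF srt] by auto

lemma memV: "Vx i j \<in> V \<longleftrightarrow> i < m \<and> 1 \<le> j \<and> j < l!i" "U \<in> V" "W \<in> V"
  by (auto simp: theta_verts_def)

lemma finV: "finite V"
proof -
  have "V \<subseteq> {U, W} \<union> (\<lambda>p. Vx (fst p) (snd p)) ` ({..<m} \<times> {..<sum_list l})"
  proof
    fix v assume "v \<in> V"
    then show "v \<in> {U, W} \<union> (\<lambda>p. Vx (fst p) (snd p)) ` ({..<m} \<times> {..<sum_list l})"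
    proof (cases v)
      case (Vx i j)
      then have "i < m" "j < l!i" using \<open>v \<in> V\<close> memV by auto
      moreover have "l!i \<le> sum_list l" using \<open>i < m\<close> by (simp add: member_le_sum_list)
      ultimately show ?thesis using Vx by (auto intro!: image_eqI[of _ _ "(i,j)"])
    qed auto
  qed
  then show ?thesis by (rule finite_subset) auto
qed

end


context TH begin
lemma pt1: "i < m \<Longrightarrow> pt i 1 = Vx i 1"
  using lge2[of i] by (simp add: theta_pt_def)
lemma ptl1: "i < m \<Longrightarrow> pt i (l!i - 1) = Vx i (l!i - 1)"
  using lge2[of i] by (simp add: theta_pt_def)

lemma nbrU: "G U y \<Longrightarrow> \<exists>i<m. y = Vx i 1 \<or> y = pt i 2"
proof -
  assume g: "G U y"
  then have ne: "y \<noteq> U" unfolding graph_sq_def by auto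
  from g consider "theta_adj l U y" | z where "theta_adj l U z" "theta_adj l z y"
    unfolding graph_sq_def by blast
  then show ?thesis
  proof cases
    case 1 then show ?thesis using adj_U pt1 by blast
  next
    case 2
    then obtain i where i: "i < m" "z = Vx i 1" using adj_U pt1 by blast
    then have "y = pt i 0 \<or> y = pt i 2" using adj_Vx[of l i 1 y] 2 by (simp add: numeral_2_eq_2)
    then have "y = pt i 2" using ne pt_eq_U[of l i 0] by auto
    then show ?thesis using i by blast
  qed
qed

end


context TH begin
lemma nbrW: "G W y \<Longrightarrow> \<exists>i<m. y = Vx i (l!i - 1) \<or> y = pt i (l!i - 2)"
proof -
  assume g: "G W y"
  then have ne: "y \<noteq> W" unfolding graph_sq_def by auto
  from g consider "theta_adj l W y" | z where "theta_adj l W z" "theta_adj l z y"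
    unfolding graph_sq_def by blast
  then show ?thesis
  proof cases
    case 1 then show ?thesis using adj_W ptl1 by blast
  next
    case 2
    then obtain i where i: "i < m" "z = Vx i (l!i - 1)" using adj_W ptl1 by blast
    have s: "Suc (l!i - 1) = l!i" "l!i - 1 - 1 = l!i - 2" using lge2[OF i(1)] by auto
    have "y = pt i (l!i - 1 - 1) \<or> y = pt i (Suc (l!i - 1))" using adj_Vx[of l i "l!i - 1" y] 2 i by auto
    moreover have "pt i (l!i) = W" using lge2[OF i(1)] by (simp add: theta_pt_def)
    ultimately have "y = pt i (l!i - 2)" using ne s by auto
    then show ?thesis using i by blast
  qed
qed

end


context TH begin

lemma nbrV:
  assumes a: "a < m" "1 \<le> b" "b < l!a" and g: "G (Vx a b) y"
  shows "y = pt a (b-2) \<or> y = pt a (b-1) \<or> y = pt a (b+1) \<or> y = pt a (b+2) \<or>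
         (b = 1 \<and> (\<exists>i<m. y = Vx i 1)) \<or> (b+1 = l!a \<and> (\<exists>i<m. y = Vx i (l!i - 1)))"
proof -
  have ne: "y \<noteq> Vx a b" using g unfolding graph_sq_def by auto
  have ptb: "pt a b = Vx a b" using a by (simp add: pt_simps(3))
  from g consider "theta_adj l (Vx a b) y" | z where "theta_adj l (Vx a b) z" "theta_adj l z y"
    unfolding graph_sq_def by blast
  then show ?thesis
  proof cases
    case 1
    then have "y = pt a (b-1) \<or> y = pt a (b+1)" using adj_Vx[of l a b y] by auto
    then show ?thesis by blast
  next
    case 2
    from adj_Vx[OF 2(1)] have "z = pt a (b-1) \<or> z = pt a (Suc b)" by auto
    then show ?thesis
    proof
      assume z: "z = pt a (b-1)"
      show ?thesis
      proof (cases "b = 1")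
        case True
        then have "z = U" using z by (simp add: pt_simps(1))
        then obtain i where "i < m" "y = pt i 1" using adj_U[of l y] 2 by auto
        then have "y = Vx i 1" "i < m" using pt1 by auto
        then show ?thesis using True by blast
      next
        case False
        then have zv: "z = Vx a (b-1)" using z a by (simp add: pt_simps(3))
        have "y = pt a (b-1-1) \<or> y = pt a (Suc (b-1))" using adj_Vx[of l a "b-1" y] 2 zv by auto
        moreover have "Suc (b-1) = b" "b - 1 - 1 = b - 2" using a by auto
        ultimately have "y = pt a (b-2)" using ne ptb by auto
        then show ?thesis by blast
      qed
    next
      assume z: "z = pt a (Suc b)"
      show ?thesis
      proof (cases "b + 1 = l!a")
        case True
        then have "z = W" using z by (simp add: pt_simps(2))
        then obtain i where "i < m" "y = pt i (l!i - 1)" using adj_W[of l y] 2 by auto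
        then have "y = Vx i (l!i - 1)" "i < m" using ptl1 by auto
        then show ?thesis using True by blast
      next
        case False
        then have zv: "z = Vx a (Suc b)" using z a by (simp add: pt_simps(3))
        have "y = pt a (Suc b - 1) \<or> y = pt a (Suc (Suc b))" using adj_Vx[of l a "Suc b" y] 2 zv by auto
        moreover have "Suc b - 1 = b" by auto
        ultimately have "y = pt a (Suc (Suc b))" using ne ptb by auto
        moreover have "Suc (Suc b) = b + 2" by simp
        ultimately show ?thesis by metis
      qed
    qed
  qed
qed

end


context TH begin

definition hasE where "hasE \<longleftrightarrow> 6 \<le> l!(m-1)"
definition eV where "eV = Vx (m-1) (l!(m-1) - 3)"

definition key :: "thv \<Rightarrow> nat \<times> nat \<times> nat" where
  "key v = (case v of U \<Rightarrow> (4,0,0) | W \<Rightarrow> (2,0,0) | Vx i j \<Rightarrow>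
     (if j \<le> 2 then (3, 2-j, i) else if l!i \<le> j+2 then (1, j+3-l!i, i)
      else if i = m-1 \<and> j+3 = l!i then (1,0,0) else (0,i,j)))"

lemma key_U[simp]: "key U = (4,0,0)" by (simp add: key_def)
lemma key_W[simp]: "key W = (2,0,0)" by (simp add: key_def)
lemma key_Vx: "key (Vx i j) = (if j \<le> 2 then (3, 2-j, i) else if l!i \<le> j+2 then (1, j+3-l!i, i)
      else if i = m-1 \<and> j+3 = l!i then (1,0,0) else (0,i,j))" by (simp add: key_def)

definition A where "A = {v\<in>V. \<exists>i j. v = Vx i j \<and> j \<le> 2}"
definition B where "B = {v\<in>V. \<exists>i j. v = Vx i j \<and> 3 \<le> j \<and> l!i \<le> j+2}"
definition EE where "EE = (if hasE then {eV} else {})"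
definition MM where "MM = {v\<in>V. \<exists>i j. v = Vx i j \<and> 3 \<le> j \<and> j+3 \<le> l!i} - EE"
definition CW where "CW = B \<union> EE"
definition CU where "CU = A \<union> {U, W}"

lemma mem_A: "Vx i j \<in> A \<longleftrightarrow> i < m \<and> 1 \<le> j \<and> j \<le> 2 \<and> j < l!i"
  by (auto simp: A_def memV)
lemma mem_B: "Vx i j \<in> B \<longleftrightarrow> i < m \<and> 3 \<le> j \<and> j < l!i \<and> l!i \<le> j+2"
  by (auto simp: B_def memV)
lemma UW_notin: "U \<notin> A" "W \<notin> A" "U \<notin> B" "W \<notin> B" "U \<notin> MM" "W \<notin> MM" "U \<notin> EE" "W \<notin> EE"
  by (auto simp: A_def B_def MM_def EE_def eV_def)

lemma hasE_l: "i = m - 1 \<Longrightarrow> j + 3 = l!i \<Longrightarrow> 3 \<le> j \<Longrightarrow> hasE"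
  by (simp add: hasE_def)

lemma mem_EE: "Vx i j \<in> EE \<longleftrightarrow> i = m-1 \<and> j + 3 = l!i \<and> 3 \<le> j"
  using m3 by (auto simp: EE_def eV_def hasE_def)

lemma eV_V: "hasE \<Longrightarrow> eV \<in> V"
  using m3 by (auto simp: hasE_def eV_def memV)

lemma mem_MM: "Vx i j \<in> MM \<longleftrightarrow> i < m \<and> 3 \<le> j \<and> j+3 \<le> l!i \<and> \<not> (i = m-1 \<and> j+3 = l!i)"
  using mem_EE[of i j] by (auto simp: MM_def memV)

lemma EE_V: "EE \<subseteq> V" using eV_V by (auto simp: EE_def)

lemma key_A: "Vx i j \<in> A \<Longrightarrow> key (Vx i j) = (3, 2-j, i)"
  by (simp add: mem_A key_Vx)
lemma key_B: "Vx i j \<in> B \<Longrightarrow> key (Vx i j) = (1, j+3-l!i, i)"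
  by (simp add: mem_B key_Vx)
lemma key_EE: "Vx i j \<in> EE \<Longrightarrow> key (Vx i j) = (1, 0, 0)"
proof -
  assume "Vx i j \<in> EE"
  then have h: "i = m-1" "j + 3 = l!i" "3 \<le> j" using mem_EE by auto
  then have "\<not> j \<le> 2" "\<not> l!i \<le> j + 2" by auto
  then show ?thesis using h by (simp add: key_Vx)
qed
lemma key_MM: "Vx i j \<in> MM \<Longrightarrow> key (Vx i j) = (0, i, j)"
  by (simp add: mem_MM key_Vx)

lemma classify: "v \<in> V \<Longrightarrow> v \<in> MM \<or> v \<in> CW \<or> v \<in> CU"
proof -
  assume v: "v \<in> V"
  show ?thesis
  proof (cases v)
    case (Vx i j)
    then have ij: "i < m" "1 \<le> j" "j < l!i" using v memV by auto
    show ?thesis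
    proof (cases "j \<le> 2")
      case True then show ?thesis using Vx ij mem_A CU_def by auto
    next
      case False
      show ?thesis
      proof (cases "l!i \<le> j + 2")
        case True then show ?thesis using Vx ij False mem_B CW_def by auto
      next
        case F2: False
        then show ?thesis using Vx ij False mem_MM mem_EE CW_def by auto
      qed
    qed
  qed (auto simp: CU_def)
qed

lemma disj: "MM \<inter> CW = {}" "MM \<inter> CU = {}" "CW \<inter> CU = {}"
proof -
  show "MM \<inter> CW = {}"
  proof (rule ccontr)
    assume "MM \<inter> CW \<noteq> {}"
    then obtain v where "v \<in> MM" "v \<in> CW" by blast
    then show False by (cases v) (auto simp: CW_def mem_MM mem_B mem_EE UW_notin)
  qed
  show "MM \<inter> CU = {}"
  proof (rule ccontr)
    assume "MM \<inter> CU \<noteq> {}"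
    then obtain v where "v \<in> MM" "v \<in> CU" by blast
    then show False by (cases v) (auto simp: CU_def mem_MM mem_A UW_notin)
  qed
  show "CW \<inter> CU = {}"
  proof (rule ccontr)
    assume "CW \<inter> CU \<noteq> {}"
    then obtain v where "v \<in> CW" "v \<in> CU" by blast
    then show False by (cases v) (auto simp: CU_def CW_def mem_EE mem_A mem_B UW_notin)
  qed
qed

lemma subs: "MM \<subseteq> V" "CW \<subseteq> V" "CU \<subseteq> V"
  using EE_V by (auto simp: MM_def CW_def B_def CU_def A_def memV)

lemma Vpart: "V = MM \<union> CW \<union> CU" using classify subs by blast

lemma cardV: "card V = card MM + card CW + card CU"
proof -
  have f: "finite MM" "finite CW" "finite CU" using subs finV finite_subset by blast+
  have "card (MM \<union> CW \<union> CU) = card (MM \<union> CW) + card CU"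
    by (rule card_Un_disjoint) (use f disj in auto)
  also have "card (MM \<union> CW) = card MM + card CW"
    by (rule card_Un_disjoint) (use f disj in auto)
  finally show ?thesis using Vpart by simp
qed

lemma key_inj: "inj_on key V"
proof (rule inj_onI)
  fix x y assume x: "x \<in> V" and y: "y \<in> V" and e: "key x = key y"
  show "x = y"
  proof (cases x)
    case U then show ?thesis using e y by (cases y) (auto simp: key_Vx split: if_splits)
  next
    case W then show ?thesis using e y by (cases y) (auto simp: key_Vx split: if_splits)
  next
    case (Vx i j)
    then have ij: "i < m" "1 \<le> j" "j < l!i" using x memV by auto
    show ?thesis
    proof (cases y)
      case (Vx i' j')
      then have ij': "i' < m" "1 \<le> j'" "j' < l!i'" using y memV by auto
      show ?thesis using e \<open>x = Vx i j\<close> Vx ij ij' by (auto simp: key_Vx split: if_splits)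
    qed (use e \<open>x = Vx i j\<close> in \<open>auto simp: key_Vx split: if_splits\<close>)
  qed
qed

lemma card_A: "card A \<le> 2*m"
proof -
  have "A \<subseteq> (\<lambda>p. Vx (fst p) (snd p)) ` ({..<m} \<times> {1,2})"
  proof
    fix v assume "v \<in> A"
    then obtain i j where "v = Vx i j" "i < m" "1 \<le> j" "j \<le> 2" unfolding A_def using memV by blast
    then show "v \<in> (\<lambda>p. Vx (fst p) (snd p)) ` ({..<m} \<times> {1,2})"
      by (intro image_eqI[of _ _ "(i,j)"]) auto
  qed
  then have "card A \<le> card ({..<m} \<times> {1::nat,2})" by (meson card_image_le finite_SigmaI finite_lessThan finite.intros card_mono finite_imageI le_trans)
  then show ?thesis by (simp add: card_cartesian_product)
qed

lemma card_B: "card B \<le> 2*m"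
proof -
  have "B \<subseteq> (\<lambda>p. Vx (fst p) (l!(fst p) - snd p)) ` ({..<m} \<times> {1,2})"
  proof
    fix v assume "v \<in> B"
    then obtain i j where "v = Vx i j" "i < m" "3 \<le> j" "j < l!i" "l!i \<le> j + 2" unfolding B_def using memV by blast
    then show "v \<in> (\<lambda>p. Vx (fst p) (l!(fst p) - snd p)) ` ({..<m} \<times> {1,2})"
      by (intro image_eqI[of _ _ "(i,l!i - j)"]) auto
  qed
  then have "card B \<le> card ({..<m} \<times> {1::nat,2})" by (meson card_image_le finite_SigmaI finite_lessThan finite.intros card_mono finite_imageI le_trans)
  then show ?thesis by (simp add: card_cartesian_product)
qed

lemma card_CW: "card CW \<le> 2*m + 1"
proof -
  have "card CW \<le> card B + card EE" unfolding CW_def by (rule card_Un_le)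
  moreover have "card EE \<le> 1" by (simp add: EE_def)
  ultimately show ?thesis using card_B by linarith
qed

lemma card_CU: "card CU \<le> 2*m + 2"
proof -
  have "card CU \<le> card A + card {U, W}" unfolding CU_def by (rule card_Un_le)
  moreover have "card {U, W} = 2" by simp
  ultimately show ?thesis using card_A by linarith
qed

end



locale TH2 = TH +
  assumes big: "k < card (theta_verts l)"
begin

definition T where "T = nat \<lceil>real (card V) / real k\<rceil>"
definition rk where "rk v = card {u \<in> MM. key u < key v}"
definition pM where "pM q = (if q < (T-2)*k then q div k else if q < (T-1)*k - card CW then T-2 else T-1)"
definition part where "part v = (if v \<in> CU then T-1 else if v \<in> CW then T-2 else pM (rk v))"

lemma k8: "k \<ge> 8" using kb m3 by linarith

lemma T_props: "card V \<le> T * k" "2 \<le> T"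
proof -
  let ?x = "real (card V) / real k"
  have kp: "real k > 0" using k8 by simp
  have c: "?x \<le> of_int \<lceil>?x\<rceil>" by (rule le_of_int_ceiling)
  have x1: "?x > 1" using big kp by (simp add: field_simps)
  then have cpos: "\<lceil>?x\<rceil> \<ge> 0" using c by linarith
  then have rT: "real T = of_int \<lceil>?x\<rceil>" unfolding T_def by simp
  have "?x \<le> real T" using c rT by simp
  then have "real (card V) \<le> real T * real k" using kp by (simp add: pos_divide_le_eq)
  then show "card V \<le> T * k" by (metis of_nat_le_iff of_nat_mult)
  have "\<lceil>?x\<rceil> > 1" using c x1 by linarith
  then have "\<lceil>?x\<rceil> \<ge> 2" by linarith
  then show "2 \<le> T" unfolding T_def by linarith
qed

lemma finMM: "finite MM" using subs finV finite_subset by blast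

lemma key_lt_trans_MM: "u \<in> MM \<Longrightarrow> key u < key v \<Longrightarrow> {w \<in> MM. key w < key u} \<subset> {w \<in> MM. key w < key v}"
  by auto

lemma rk_mono: "u \<in> MM \<Longrightarrow> key u < key v \<Longrightarrow> rk u < rk v"
  unfolding rk_def using finMM
  by (intro psubset_card_mono) (auto intro: finite_subset)

lemma rk_lt: "v \<in> MM \<Longrightarrow> rk v < card MM"
  unfolding rk_def using finMM
  by (intro psubset_card_mono) auto

lemma rk_inj: "inj_on rk MM"
proof (rule inj_onI)
  fix x y assume x: "x \<in> MM" and y: "y \<in> MM" and e: "rk x = rk y"
  have "key x = key y"
  proof (rule ccontr)
    assume "key x \<noteq> key y"
    then have "key x < key y \<or> key y < key x" by auto
    then show False using rk_mono x y e by fastforce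
  qed
  then show "x = y" using key_inj x y subs unfolding inj_on_def by blast
qed

lemma card_rk_interval: "card {u \<in> MM. a \<le> rk u \<and> rk u < b} \<le> b - a"
proof -
  have "card {u \<in> MM. a \<le> rk u \<and> rk u < b} \<le> card {a..<b}"
    by (rule card_inj_on_le[where f=rk]) (use rk_inj in \<open>auto simp: inj_on_def\<close>)
  then show ?thesis by simp
qed

lemma rk_succ:
  assumes v: "Vx i j \<in> MM" and w: "Vx i (j-1) \<in> MM"
  shows "rk (Vx i j) = Suc (rk (Vx i (j-1)))"
proof -
  have j: "3 < j" using w v mem_MM by auto
  have "{u \<in> MM. key u < key (Vx i j)} = insert (Vx i (j-1)) {u \<in> MM. key u < key (Vx i (j-1))}"
  proof (intro equalityI subsetI)
    fix u assume u: "u \<in> {u \<in> MM. key u < key (Vx i j)}"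
    then obtain i' j' where u': "u = Vx i' j'" using UW_notin by (cases u) auto
    then have "u \<in> MM" "key u = (0,i',j')" using u key_MM by auto
    then show "u \<in> insert (Vx i (j-1)) {u \<in> MM. key u < key (Vx i (j-1))}"
      using u u' key_MM[OF v] key_MM[OF w] j by auto
  next
    fix u assume u: "u \<in> insert (Vx i (j-1)) {u \<in> MM. key u < key (Vx i (j-1))}"
    have lt: "key (Vx i (j-1)) < key (Vx i j)" using key_MM[OF v] key_MM[OF w] j by simp
    from u show "u \<in> {u \<in> MM. key u < key (Vx i j)}"
      using lt w by (auto intro: less_trans)
  qed
  moreover have "Vx i (j-1) \<notin> {u \<in> MM. key u < key (Vx i (j-1))}" by simp
  moreover have "finite {u \<in> MM. key u < key (Vx i (j-1))}" using finMM by simp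
  ultimately show ?thesis unfolding rk_def by simp
qed

lemma cards: "card MM + card CW + card CU \<le> T * k" "card CW \<le> k" "card CU \<le> k"
  using T_props cardV card_CW card_CU kb by auto

lemma pM_lt: "pM q < T"
proof -
  have "q < (T-2)*k \<Longrightarrow> q div k < T - 2" by (simp add: less_mult_imp_div_less)
  then show ?thesis using T_props(2) unfolding pM_def by auto
qed

lemma pM_diam:
  assumes ab: "a < b" "b < card MM" and e: "pM a = pM b"
  shows "b - a \<le> k - 1"
proof -
  have c: "card MM + card CW + card CU \<le> T * k" "card CW \<le> k" using cards by auto
  obtain P where P: "T = P + 2" using T_props(2) by (metis add.commute le_Suc_ex)
  have e1: "(T-2)*k = P*k" and e2: "(T-1)*k = P*k + k" and e3: "T * k = P*k + 2*k" using P by (auto simp: algebra_simps)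
  have pMe: "pM q = (if q < P*k then q div k else if q < P*k + k - card CW then P else P + 1)" for q
    unfolding pM_def e1 e2 using P by simp
  have dl: "q < P*k \<Longrightarrow> q div k < P" for q by (simp add: less_mult_imp_div_less)
  consider "b < P*k" | "P*k \<le> b" "b < P*k + k - card CW" | "P*k + k - card CW \<le> b" by linarith
  then show ?thesis
  proof cases
    case 1
    then have "a < P*k" using ab by linarith
    then have q: "a div k = b div k" using e 1 pMe by simp
    have "a div k * k + a mod k = a" "b div k * k + b mod k = b" by (rule div_mult_mod_eq)+
    moreover have "b mod k < k" using k8 by simp
    moreover have "b div k * k = a div k * k" using q by simp
    ultimately show ?thesis by linarith
  next
    case 2
    have "\<not> a < P*k"
    proof
      assume a: "a < P*k"
      then have "pM a < P" using dl pMe by simp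
      moreover have "pM b = P" using 2 pMe by simp
      ultimately show False using e by simp
    qed
    then show ?thesis using 2 c ab by linarith
  next
    case 3
    have pb: "pM b = P + 1" using 3 c pMe by auto
    have "\<not> a < P*k + k - card CW"
    proof
      assume a: "a < P*k + k - card CW"
      have "pM a \<le> P" using a dl[of a] pMe by (auto split: if_splits)
      then show False using e pb by simp
    qed
    then show ?thesis using ab c e3 by linarith
  qed
qed

end


context TH2 begin

lemma finCWU: "finite CW" "finite CU" using subs finV finite_subset by blast+

lemma part_lt: "part v < T"
  using pM_lt T_props(2) unfolding part_def by auto

lemma part_CU: "v \<in> CU \<Longrightarrow> part v = T - 1" by (simp add: part_def)
lemma part_CW: "v \<in> CW \<Longrightarrow> part v = T - 2" using disj by (auto simp: part_def)
lemma part_MM: "v \<in> MM \<Longrightarrow> part v = pM (rk v)" using disj by (auto simp: part_def)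

lemma phase0_MM: "w \<in> V \<Longrightarrow> fst (key w) = 0 \<Longrightarrow> w \<in> MM"
proof -
  assume w: "w \<in> V" and k0: "fst (key w) = 0"
  show "w \<in> MM"
  proof (cases w)
    case (Vx i j)
    then have ij: "i < m" "1 \<le> j" "j < l!i" using w memV by auto
    then show ?thesis using k0 Vx by (auto simp: key_Vx mem_MM split: if_splits)
  qed (use k0 in auto)
qed

lemma class_T2: "card {w\<in>V. part w = T - 2} \<le> k"
proof -
  have c: "card MM + card CW + card CU \<le> T * k" "card CW \<le> k" using cards by auto
  obtain P where P: "T = P + 2" using T_props(2) by (metis add.commute le_Suc_ex)
  have e1: "(T-2)*k = P*k" and e2: "(T-1)*k = P*k + k" using P by (auto simp: algebra_simps)
  have "{w\<in>V. part w = T - 2} \<subseteq> CW \<union> {u \<in> MM. P*k \<le> rk u \<and> rk u < P*k + k - card CW}"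
  proof
    fix w assume w: "w \<in> {w\<in>V. part w = T - 2}"
    then consider "w \<in> MM" | "w \<in> CW" | "w \<in> CU" using classify by blast
    then show "w \<in> CW \<union> {u \<in> MM. P*k \<le> rk u \<and> rk u < P*k + k - card CW}"
    proof cases
      case 1
      then have pm: "pM (rk w) = P" using w part_MM P by auto
      have "\<not> rk w < P * k"
      proof
        assume "rk w < P*k"
        then have "rk w div k < P" by (simp add: less_mult_imp_div_less)
        then show False using pm \<open>rk w < P*k\<close> unfolding pM_def e1 by simp
      qed
      moreover have "rk w < P*k + k - card CW"
        using pm calculation unfolding pM_def e1 e2 by (auto split: if_splits simp: P)
      ultimately show ?thesis using 1 by auto
    next
      case 3 then show ?thesis using w part_CU P by auto
    qed auto
  qed
  then have "card {w\<in>V. part w = T - 2} \<le> card (CW \<union> {u \<in> MM. P*k \<le> rk u \<and> rk u < P*k + k - card CW})"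
    by (intro card_mono) (use finV subs finMM finCWU in auto)
  also have "\<dots> \<le> card CW + card {u \<in> MM. P*k \<le> rk u \<and> rk u < P*k + k - card CW}" by (rule card_Un_le)
  also have "\<dots> \<le> card CW + (P*k + k - card CW - P*k)" using card_rk_interval by (meson add_le_mono le_refl)
  also have "\<dots> \<le> k" using c by linarith
  finally show ?thesis .
qed

lemma class_T1: "card {w\<in>V. part w = T - 1} \<le> k"
proof -
  have c: "card MM + card CW + card CU \<le> T * k" "card CW \<le> k" using cards by auto
  obtain P where P: "T = P + 2" using T_props(2) by (metis add.commute le_Suc_ex)
  have e1: "(T-2)*k = P*k" and e2: "(T-1)*k = P*k + k" and e3: "T*k = P*k + 2*k" using P by (auto simp: algebra_simps)
  have "{w\<in>V. part w = T - 1} \<subseteq> CU \<union> {u \<in> MM. P*k + k - card CW \<le> rk u \<and> rk u < card MM}"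
  proof
    fix w assume w: "w \<in> {w\<in>V. part w = T - 1}"
    then consider "w \<in> MM" | "w \<in> CW" | "w \<in> CU" using classify by blast
    then show "w \<in> CU \<union> {u \<in> MM. P*k + k - card CW \<le> rk u \<and> rk u < card MM}"
    proof cases
      case 1
      then have pm: "pM (rk w) = P + 1" using w part_MM P by auto
      have "\<not> rk w < P * k"
      proof
        assume "rk w < P*k"
        then have "rk w div k < P" by (simp add: less_mult_imp_div_less)
        then show False using pm \<open>rk w < P*k\<close> unfolding pM_def e1 by simp
      qed
      moreover have "P*k + k - card CW \<le> rk w"
        using pm calculation unfolding pM_def e1 e2 by (auto split: if_splits simp: P)
      ultimately show ?thesis using 1 rk_lt by auto
    next
      case 2 then show ?thesis using w part_CW P by auto
    qed auto
  qed
  then have "card {w\<in>V. part w = T - 1} \<le> card (CU \<union> {u \<in> MM. P*k + k - card CW \<le> rk u \<and> rk u < card MM})"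
    by (intro card_mono) (use finV subs finMM finCWU in auto)
  also have "\<dots> \<le> card CU + card {u \<in> MM. P*k + k - card CW \<le> rk u \<and> rk u < card MM}" by (rule card_Un_le)
  also have "\<dots> \<le> card CU + (card MM - (P*k + k - card CW))" using card_rk_interval by (meson add_le_mono le_refl)
  also have "\<dots> \<le> k" using c e3 cards(3) by linarith
  finally show ?thesis .
qed

lemma core_count:
  assumes v: "v \<in> V" and cls: "card {w\<in>V. part w = part v} \<le> k"
    and YL: "card {w\<in>V. key w < key v \<and> G v w \<and> part w \<noteq> part v} \<le> card {w\<in>V. part w = part v \<and> key v < key w}"
  shows "card {w\<in>V. key w < key v \<and> (G w v \<or> G v w \<or> part w = part v)} < k"
proof -
  let ?S = "{w\<in>V. key w < key v \<and> (G w v \<or> G v w \<or> part w = part v)}"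
  let ?Y = "{w\<in>V. key w < key v \<and> G v w \<and> part w \<noteq> part v}"
  let ?L = "{w\<in>V. part w = part v \<and> key v < key w}"
  let ?P = "{w\<in>V. part w = part v}"
  have fin: "finite ?Y" "finite ?P" "finite ?L" using finV by auto
  have "?S \<subseteq> ?Y \<union> (?P - {v} - ?L)" using sq_sym by auto
  then have "card ?S \<le> card (?Y \<union> (?P - {v} - ?L))" by (intro card_mono) (use fin in auto)
  also have "\<dots> \<le> card ?Y + card (?P - {v} - ?L)" by (rule card_Un_le)
  also have "card (?P - {v} - ?L) = card ?P - 1 - card ?L"
  proof -
    have "card (?P - {v}) = card ?P - 1" using v fin by simp
    moreover have "?L \<subseteq> ?P - {v}" by auto
    ultimately show ?thesis using fin by (simp add: card_Diff_subset)
  qed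
  finally have "card ?S \<le> card ?Y + (card ?P - 1 - card ?L)" .
  moreover have "card ?P \<ge> 1"
  proof -
    have "v \<in> ?P" using v by simp
    then have "card ?P > 0" using fin(2) card_gt_0_iff by blast
    then show ?thesis by simp
  qed
  moreover have "card ?L \<le> card ?P - 1"
  proof -
    have "?L \<subseteq> ?P - {v}" by auto
    then have "card ?L \<le> card (?P - {v})" by (intro card_mono) (use fin in auto)
    moreover have "card (?P - {v}) = card ?P - 1" using v fin by simp
    ultimately show ?thesis by simp
  qed
  ultimately show ?thesis using YL cls k8 by linarith
qed

lemma MM_count:
  assumes v: "v \<in> MM"
  shows "card {w\<in>V. key w < key v \<and> (G w v \<or> G v w \<or> part w = part v)} < k"
proof -
  obtain i j where vij: "v = Vx i j" using v UW_notin by (cases v) auto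
  have ij: "i < m" "3 \<le> j" "j+3 \<le> l!i" "\<not> (i = m-1 \<and> j+3 = l!i)" using v vij mem_MM by auto
  have kv: "key v = (0,i,j)" using key_MM v vij by simp
  let ?S = "{w\<in>V. key w < key v \<and> (G w v \<or> G v w \<or> part w = part v)}"
  have "?S \<subseteq> {u\<in>MM. rk v - (k-1) \<le> rk u \<and> rk u < rk v}"
  proof
    fix w assume w: "w \<in> ?S"
    then have wV: "w \<in> V" and kw: "key w < key v" by auto
    have "fst (key w) = 0" using kw kv by (cases "key w") auto
    then have wM: "w \<in> MM" using phase0_MM wV by simp
    have rlt: "rk w < rk v" using rk_mono wM kw by simp
    have "rk v - rk w \<le> k - 1"
    proof (cases "part w = part v")
      case True
      then have "pM (rk w) = pM (rk v)" using part_MM wM v by simp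
      then show ?thesis using pM_diam[OF rlt rk_lt[OF v]] by simp
    next
      case False
      then have g: "G v w" using w sq_sym by auto
      obtain i' j' where wij: "w = Vx i' j'" using wM UW_notin by (cases w) auto
      have kw': "key w = (0, i', j')" using key_MM wM wij by simp
      have ptv: "\<And>d. 1 \<le> d \<Longrightarrow> d < l!i \<Longrightarrow> pt i d = Vx i d" by (simp add: pt_simps(3))
      from nbrV[of i j w] ij g vij
      have "w = pt i (j-2) \<or> w = pt i (j-1) \<or> w = pt i (j+1) \<or> w = pt i (j+2)" by auto
      then have "w = Vx i (j-2) \<or> w = Vx i (j-1) \<or> w = Vx i (j+1) \<or> w = Vx i (j+2)"
        using ptv[of "j-2"] ptv[of "j-1"] ptv[of "j+1"] ptv[of "j+2"] ij by auto
      then have "w = Vx i (j-2) \<or> w = Vx i (j-1)" using kw kw' kv wij by auto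
      then show ?thesis
      proof
        assume w1: "w = Vx i (j-1)"
        have m1: "Vx i (j-1) \<in> MM" using wM w1 by simp
        have "rk v = Suc (rk (Vx i (j-1)))" using rk_succ[OF _ m1] v vij by simp
        then have "rk v = Suc (rk w)" using w1 by simp
        then show ?thesis using k8 by simp
      next
        assume w2: "w = Vx i (j-2)"
        have j2: "3 \<le> j - 2" using wM w2 mem_MM by simp
        have m1: "Vx i (j-1) \<in> MM" using j2 ij unfolding mem_MM by auto
        have jj: "j - 1 - 1 = j - 2" by arith
        have m2: "Vx i (j-1-1) \<in> MM" using wM w2 jj by simp
        have "rk v = Suc (rk (Vx i (j-1)))" using rk_succ[OF _ m1] v vij by simp
        moreover have "rk (Vx i (j-1)) = Suc (rk (Vx i (j-1-1)))" using rk_succ[OF m1 m2] .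
        moreover have "Vx i (j-1-1) = w" using w2 jj by simp
        ultimately show ?thesis using k8 by simp
      qed
    qed
    then show "w \<in> {u\<in>MM. rk v - (k-1) \<le> rk u \<and> rk u < rk v}" using wM rlt by auto
  qed
  then have "card ?S \<le> card {u\<in>MM. rk v - (k-1) \<le> rk u \<and> rk u < rk v}"
    by (intro card_mono) (use finMM in auto)
  also have "\<dots> \<le> rk v - (rk v - (k-1))" by (rule card_rk_interval)
  also have "\<dots> < k" using k8 by linarith
  finally show ?thesis .
qed

end


context TH2 begin

lemma key_CU_phase: "w \<in> CU \<Longrightarrow> fst (key w) \<ge> 2"
  by (cases w) (auto simp: CU_def A_def key_Vx)

lemma key_CW_phase: "w \<in> CW \<Longrightarrow> fst (key w) = 1"
proof -
  assume w: "w \<in> CW"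
  then obtain i j where "w = Vx i j" using UW_notin CW_def by (cases w) auto
  then show ?thesis using w key_B key_EE CW_def by auto
qed

lemma CU_bound:
  assumes v: "v \<in> CU"
    and inj: "inj_on f {w\<in>V. key w < key v \<and> G v w \<and> w \<notin> CU}"
    and img: "f ` {w\<in>V. key w < key v \<and> G v w \<and> w \<notin> CU} \<subseteq> {w\<in>CU. key v < key w}"
  shows "card {w\<in>V. key w < key v \<and> G v w \<and> part w \<noteq> part v} \<le> card {w\<in>V. part w = part v \<and> key v < key w}"
proof -
  let ?Y' = "{w\<in>V. key w < key v \<and> G v w \<and> w \<notin> CU}"
  have "{w\<in>V. key w < key v \<and> G v w \<and> part w \<noteq> part v} \<subseteq> ?Y'" using v part_CU by auto
  then have "card {w\<in>V. key w < key v \<and> G v w \<and> part w \<noteq> part v} \<le> card ?Y'"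
    by (intro card_mono) (use finV in auto)
  also have "\<dots> = card (f ` ?Y')" using card_image[OF inj] by simp
  also have "\<dots> \<le> card {w\<in>CU. key v < key w}" by (intro card_mono) (use img finCWU in auto)
  also have "\<dots> \<le> card {w\<in>V. part w = part v \<and> key v < key w}"
    by (intro card_mono) (use finV subs v part_CU in auto)
  finally show ?thesis .
qed

lemma CW_bound:
  assumes v: "v \<in> CW"
    and inj: "inj_on f {w\<in>MM. key w < key v \<and> G v w}"
    and img: "f ` {w\<in>MM. key w < key v \<and> G v w} \<subseteq> {w\<in>CW. key v < key w}"
  shows "card {w\<in>V. key w < key v \<and> G v w \<and> part w \<noteq> part v} \<le> card {w\<in>V. part w = part v \<and> key v < key w}"
proof -
  let ?Y' = "{w\<in>MM. key w < key v \<and> G v w}"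
  have "{w\<in>V. key w < key v \<and> G v w \<and> part w \<noteq> part v} \<subseteq> ?Y'"
  proof
    fix w assume w: "w \<in> {w\<in>V. key w < key v \<and> G v w \<and> part w \<noteq> part v}"
    have "w \<notin> CW" using w v part_CW by auto
    moreover have "w \<notin> CU"
    proof
      assume "w \<in> CU"
      then have "fst (key w) \<ge> 2" by (rule key_CU_phase)
      moreover have "fst (key v) = 1" using v by (rule key_CW_phase)
      ultimately show False using w by (cases "key w", cases "key v") auto
    qed
    ultimately show "w \<in> ?Y'" using w classify by auto
  qed
  then have "card {w\<in>V. key w < key v \<and> G v w \<and> part w \<noteq> part v} \<le> card ?Y'"
    by (intro card_mono) (use finMM in auto)
  also have "\<dots> = card (f ` ?Y')" using card_image[OF inj] by simp
  also have "\<dots> \<le> card {w\<in>CW. key v < key w}" by (intro card_mono) (use img finCWU in auto)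
  also have "\<dots> \<le> card {w\<in>V. part w = part v \<and> key v < key w}"
    by (intro card_mono) (use finV subs v part_CW in auto)
  finally show ?thesis .
qed

lemma notCU_Vx: "w \<in> V \<Longrightarrow> w \<notin> CU \<Longrightarrow> \<exists>i j. w = Vx i j \<and> i < m \<and> 3 \<le> j \<and> j < l!i"
proof -
  assume w: "w \<in> V" "w \<notin> CU"
  then obtain i j where "w = Vx i j" by (cases w) (auto simp: CU_def)
  then show ?thesis using w memV mem_A CU_def by force
qed

definition fB :: "thv \<Rightarrow> thv" where "fB w = (case w of Vx i j \<Rightarrow> Vx i (l!i - j) | _ \<Rightarrow> U)"

lemma fB_inj: "inj_on fB B"
proof (rule inj_onI)
  fix x y assume x: "x \<in> B" and y: "y \<in> B" and e: "fB x = fB y"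
  obtain i j where xi: "x = Vx i j" using x UW_notin by (cases x) auto
  obtain i' j' where yi: "y = Vx i' j'" using y UW_notin by (cases y) auto
  show "x = y" using x y e xi yi mem_B by (auto simp: fB_def)
qed

lemma fB_B: "w \<in> B \<Longrightarrow> \<exists>i j. w = Vx i j \<and> fB w = Vx i (l!i - j) \<and> fB w \<in> A \<and> 4 \<le> l!i \<and> l!i - j \<in> {1,2}"
proof -
  assume w: "w \<in> B"
  then obtain i j where "w = Vx i j" using UW_notin by (cases w) auto
  then show ?thesis using w mem_B mem_A by (auto simp: fB_def)
qed

lemma Y_W: "{w\<in>V. key w < key W \<and> G W w \<and> w \<notin> CU} \<subseteq> B"
proof
  fix w assume w: "w \<in> {w\<in>V. key w < key W \<and> G W w \<and> w \<notin> CU}"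
  then obtain i j where ij: "w = Vx i j" "i < m" "3 \<le> j" "j < l!i" using notCU_Vx by blast
  obtain i' where i': "i' < m" "w = Vx i' (l!i' - 1) \<or> w = pt i' (l!i' - 2)" using nbrW w by blast
  have "l!i' \<noteq> 2"
  proof
    assume "l!i' = 2"
    then have "pt i' (l!i' - 2) = U" by (simp add: pt_simps)
    then show False using i' ij \<open>l!i' = 2\<close> by auto
  qed
  then have "pt i' (l!i' - 2) = Vx i' (l!i' - 2)" using lge2[OF i'(1)] by (simp add: pt_simps)
  then have "i = i' \<and> (j = l!i - 1 \<or> j = l!i - 2)" using i' ij by auto
  then show "w \<in> B" using ij mem_B by auto
qed

lemma count_W: "card {w\<in>V. key w < key W \<and> G W w \<and> part w \<noteq> part W} \<le> card {w\<in>V. part w = part W \<and> key W < key w}"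
proof (rule CU_bound[where f=fB])
  show "W \<in> CU" by (simp add: CU_def)
  show "inj_on fB {w \<in> V. key w < key W \<and> G W w \<and> w \<notin> CU}"
    using fB_inj Y_W inj_on_subset by blast
  show "fB ` {w \<in> V. key w < key W \<and> G W w \<and> w \<notin> CU} \<subseteq> {w \<in> CU. key W < key w}"
  proof
    fix x assume "x \<in> fB ` {w \<in> V. key w < key W \<and> G W w \<and> w \<notin> CU}"
    then obtain w where w: "w \<in> B" "x = fB w" using Y_W by blast
    then obtain i j where "x = Vx i (l!i - j)" "x \<in> A" using fB_B by blast
    then show "x \<in> {w \<in> CU. key W < key w}" using key_A CU_def by auto
  qed
qed

lemma count_U: "card {w\<in>V. key w < key U \<and> G U w \<and> part w \<noteq> part U} \<le> card {w\<in>V. part w = part U \<and> key U < key w}"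
proof -
  have "{w\<in>V. key w < key U \<and> G U w \<and> part w \<noteq> part U} = {}"
  proof (rule ccontr)
    assume "{w\<in>V. key w < key U \<and> G U w \<and> part w \<noteq> part U} \<noteq> {}"
    then obtain w where w: "w \<in> V" "G U w" "part w \<noteq> part U" by blast
    obtain i where i: "i < m" "w = Vx i 1 \<or> w = pt i 2" using nbrU w by blast
    have "w \<in> CU"
    proof (cases "l!i = 2")
      case True
      then have "pt i 2 = W" by (simp add: pt_simps)
      then show ?thesis using i mem_A lge2[OF i(1)] CU_def by auto
    next
      case False
      then have "pt i 2 = Vx i 2" by (simp add: pt_simps)
      then show ?thesis using i mem_A lge2[OF i(1)] False CU_def by auto
    qed
    then show False using w part_CU CU_def by auto
  qed
  then show ?thesis by (metis card.empty zero_le)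
qed

end


context TH2 begin

lemma nbr_far:
  assumes a: "a < m" "1 \<le> b" "b < l!a" and g: "G (Vx a b) (Vx i j)" and j: "2 \<le> j"
  shows "(i = a \<and> (j = b-2 \<or> j = b-1 \<or> j = b+1 \<or> j = b+2)) \<or> (b+1 = l!a \<and> i < m \<and> j = l!i - 1)"
proof -
  have "Vx i j = pt a (b-2) \<or> Vx i j = pt a (b-1) \<or> Vx i j = pt a (b+1) \<or> Vx i j = pt a (b+2) \<or>
         (b = 1 \<and> (\<exists>i'<m. Vx i j = Vx i' 1)) \<or> (b+1 = l!a \<and> (\<exists>i'<m. Vx i j = Vx i' (l!i' - 1)))"
    using nbrV[OF a g] .
  moreover have "\<And>d. Vx i j = pt a d \<Longrightarrow> i = a \<and> j = d" using pt_eq_Vx[of l a _ i j] by metis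
  ultimately show ?thesis using j by fastforce
qed

lemma count_A:
  assumes v: "v \<in> A"
  shows "card {w\<in>V. key w < key v \<and> G v w \<and> part w \<noteq> part v} \<le> card {w\<in>V. part w = part v \<and> key v < key w}"
proof -
  obtain a b where vab: "v = Vx a b" using v UW_notin by (cases v) auto
  have ab: "a < m" "1 \<le> b" "b \<le> 2" "b < l!a" using v vab mem_A by auto
  have vCU: "v \<in> CU" using v CU_def by auto
  let ?Y = "{w\<in>V. key w < key v \<and> G v w \<and> w \<notin> CU}"
  have Yf: "\<And>w. w \<in> ?Y \<Longrightarrow> \<exists>i j. w = Vx i j \<and> i < m \<and> 3 \<le> j \<and> j < l!i \<and>
      ((i = a \<and> (j = b-2 \<or> j = b-1 \<or> j = b+1 \<or> j = b+2)) \<or> (b+1 = l!a \<and> j = l!i - 1))"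
  proof -
    fix w assume w: "w \<in> ?Y"
    then obtain i j where ij: "w = Vx i j" "i < m" "3 \<le> j" "j < l!i" using notCU_Vx by blast
    have "G (Vx a b) (Vx i j)" using w ij vab by simp
    from nbr_far[OF ab(1,2,4) this] ij show "\<exists>i j. w = Vx i j \<and> i < m \<and> 3 \<le> j \<and> j < l!i \<and>
      ((i = a \<and> (j = b-2 \<or> j = b-1 \<or> j = b+1 \<or> j = b+2)) \<or> (b+1 = l!a \<and> j = l!i - 1))" by auto
  qed
  have kv: "key v = (3, 2-b, a)" using key_A v vab by simp
  consider "b = 2" "l!a \<ge> 4" | "b = 2" "l!a = 3" | "b = 1" "l!a \<ge> 3" | "b = 1" "l!a = 2" using ab by linarith
  then show ?thesis
  proof cases
    case 1
    have sub: "?Y \<subseteq> {Vx a 3, Vx a 4}"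
    proof
      fix w assume "w \<in> ?Y"
      from Yf[OF this] 1 show "w \<in> {Vx a 3, Vx a 4}" by auto
    qed
    let ?f = "\<lambda>w. if w = Vx a 3 then Vx a 1 else U"
    show ?thesis
    proof (rule CU_bound[OF vCU, where f="?f"])
      show "inj_on ?f ?Y" by (rule inj_on_subset[OF _ sub]) (auto simp: inj_on_def)
      have "Vx a 1 \<in> A" using ab mem_A by auto
      then have "?f ` {Vx a 3, Vx a 4} \<subseteq> {w \<in> CU. key v < key w}" using kv key_A[of a 1] 1 CU_def by auto
      then show "?f ` ?Y \<subseteq> {w \<in> CU. key v < key w}" using sub by blast
    qed
  next
    case 2
    have a0: "a = 0" using 2 lge4[of a] ab by (cases "a = 0") auto
    have sub: "?Y \<subseteq> B"
    proof
      fix w assume "w \<in> ?Y"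
      from Yf[OF this] 2 obtain i j where "w = Vx i j" "i < m" "3 \<le> j" "j < l!i" "j = l!i - 1" by auto
      then show "w \<in> B" using mem_B by auto
    qed
    show ?thesis
    proof (rule CU_bound[OF vCU, where f=fB])
      show "inj_on fB ?Y" by (rule inj_on_subset[OF fB_inj sub])
      show "fB ` ?Y \<subseteq> {w \<in> CU. key v < key w}"
      proof
        fix x assume "x \<in> fB ` ?Y"
        then obtain w where w: "w \<in> ?Y" "x = fB w" by blast
        from Yf[OF w(1)] 2 obtain i j where ij: "w = Vx i j" "i < m" "3 \<le> j" "j < l!i" "j = l!i - 1" by auto
        then have "x = Vx i 1" using w by (auto simp: fB_def)
        moreover have "Vx i 1 \<in> A" using ij mem_A by auto
        ultimately show "x \<in> {w \<in> CU. key v < key w}" using kv key_A[of i 1] 2 CU_def by auto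
      qed
    qed
  next
    case 3
    have sub: "?Y \<subseteq> {Vx a 3}"
    proof
      fix w assume "w \<in> ?Y"
      from Yf[OF this] 3 show "w \<in> {Vx a 3}" by auto
    qed
    show ?thesis
    proof (rule CU_bound[OF vCU, where f="\<lambda>_. U"])
      show "inj_on (\<lambda>_. U) ?Y" by (rule inj_on_subset[OF _ sub]) auto
      have UC: "U \<in> CU" by (simp add: CU_def)
      show "(\<lambda>_. U) ` ?Y \<subseteq> {w \<in> CU. key v < key w}" using kv UC by auto
    qed
  next
    case 4
    have a0: "a = 0" using 4 lge4[of a] ab by (cases "a = 0") auto
    have sub: "?Y \<subseteq> B"
    proof
      fix w assume "w \<in> ?Y"
      from Yf[OF this] 4 obtain i j where "w = Vx i j" "i < m" "3 \<le> j" "j < l!i" "j = l!i - 1" by auto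
      then show "w \<in> B" using mem_B by auto
    qed
    show ?thesis
    proof (rule CU_bound[OF vCU, where f=fB])
      show "inj_on fB ?Y" by (rule inj_on_subset[OF fB_inj sub])
      show "fB ` ?Y \<subseteq> {w \<in> CU. key v < key w}"
      proof
        fix x assume "x \<in> fB ` ?Y"
        then obtain w where w: "w \<in> ?Y" "x = fB w" by blast
        from Yf[OF w(1)] 4 obtain i j where ij: "w = Vx i j" "i < m" "3 \<le> j" "j < l!i" "j = l!i - 1" by auto
        then have "x = Vx i 1" using w by (auto simp: fB_def)
        moreover have "Vx i 1 \<in> A" using ij mem_A by auto
        moreover have "i \<noteq> 0"
        proof
          assume "i = 0"
          then show False using ij a0 4 by simp
        qed
        ultimately show "x \<in> {w \<in> CU. key v < key w}" using kv key_A[of i 1] 4 a0 CU_def by auto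
      qed
    qed
  qed
qed

end


context TH2 begin

lemma MM_Vx: "w \<in> MM \<Longrightarrow> \<exists>i j. w = Vx i j \<and> i < m \<and> 3 \<le> j \<and> j+3 \<le> l!i \<and> \<not> (i = m-1 \<and> j+3 = l!i)"
proof -
  assume w: "w \<in> MM"
  then obtain i j where "w = Vx i j" using UW_notin by (cases w) auto
  then show ?thesis using w mem_MM by auto
qed

lemma count_E:
  assumes hE: "hasE"
  shows "card {w\<in>V. key w < key eV \<and> G eV w \<and> part w \<noteq> part eV} \<le> card {w\<in>V. part w = part eV \<and> key eV < key w}"
proof -
  define a where "a = m - 1"
  define L where "L = l!a"
  have a: "a < m" using m3 a_def by simp
  have L6: "6 \<le> L" using hE hasE_def L_def a_def by simp
  have ve: "eV = Vx a (L-3)" by (simp add: eV_def a_def L_def)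
  have vCW: "eV \<in> CW" using hE by (simp add: CW_def EE_def)
  have kv: "key eV = (1,0,0)" using key_EE[of a "L-3"] ve vCW hE by (simp add: EE_def)
  let ?Y = "{w\<in>MM. key w < key eV \<and> G eV w}"
  have sub: "?Y \<subseteq> {Vx a (L-5), Vx a (L-4)}"
  proof
    fix w assume w: "w \<in> ?Y"
    then obtain i j where ij: "w = Vx i j" "i < m" "3 \<le> j" "j+3 \<le> l!i" using MM_Vx by blast
    have g: "G (Vx a (L-3)) (Vx i j)" using w ij ve by simp
    have "(i = a \<and> (j = L-3-2 \<or> j = L-3-1 \<or> j = L-3+1 \<or> j = L-3+2)) \<or> (L-3+1 = l!a \<and> i < m \<and> j = l!i - 1)"
      using nbr_far[OF a _ _ g] ij L6 L_def by auto
    then show "w \<in> {Vx a (L-5), Vx a (L-4)}" using ij L6 L_def by auto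
  qed
  let ?f = "\<lambda>w. if w = Vx a (L-5) then Vx a (L-1) else Vx a (L-2)"
  show ?thesis
  proof (rule CW_bound[OF vCW, where f="?f"])
    show "inj_on ?f ?Y" by (rule inj_on_subset[OF _ sub]) (use L6 in \<open>auto simp: inj_on_def\<close>)
    have b1: "Vx a (L-1) \<in> B" "Vx a (L-2) \<in> B" using a L6 mem_B L_def by auto
    have "key (Vx a (L-1)) = (1,2,a)" "key (Vx a (L-2)) = (1,1,a)" using key_B[OF b1(1)] key_B[OF b1(2)] L6 L_def by auto
    then have "?f ` {Vx a (L-5), Vx a (L-4)} \<subseteq> {w \<in> CW. key eV < key w}" using kv b1 CW_def by auto
    then show "?f ` ?Y \<subseteq> {w \<in> CW. key eV < key w}" using sub by blast
  qed
qed

lemma count_B: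
  assumes v: "v \<in> B"
  shows "card {w\<in>V. key w < key v \<and> G v w \<and> part w \<noteq> part v} \<le> card {w\<in>V. part w = part v \<and> key v < key w}"
proof -
  obtain a b where vab: "v = Vx a b" using v UW_notin by (cases v) auto
  define L where "L = l!a"
  have ab: "a < m" "3 \<le> b" "b < L" "L \<le> b + 2" using v vab mem_B L_def by auto
  have vCW: "v \<in> CW" using v CW_def by auto
  have kv: "key v = (1, b+3-L, a)" using key_B v vab L_def by simp
  define L' where "L' = l!(m-1)"
  have LL: "L \<le> L'" using lmax[OF ab(1)] L_def L'_def by simp
  have m1: "m - 1 < m" using m3 by simp
  have tB: "Vx (m-1) (L'-1) \<in> B" using mem_B m1 LL ab L'_def by auto
  have ktB: "key (Vx (m-1) (L'-1)) = (1,2,m-1)" using key_B[OF tB] LL ab L'_def by auto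
  let ?Y = "{w\<in>MM. key w < key v \<and> G v w}"
  have Yf: "\<And>w. w \<in> ?Y \<Longrightarrow> (w = Vx a (L-4) \<and> b = L-2) \<or> (w = Vx a (L-3) \<and> a \<noteq> m-1)"
  proof -
    fix w assume w: "w \<in> ?Y"
    then obtain i j where ij: "w = Vx i j" "i < m" "3 \<le> j" "j+3 \<le> l!i" "\<not> (i = m-1 \<and> j+3 = l!i)" using MM_Vx by blast
    have g: "G (Vx a b) (Vx i j)" using w ij vab by simp
    have "(i = a \<and> (j = b-2 \<or> j = b-1 \<or> j = b+1 \<or> j = b+2)) \<or> (b+1 = l!a \<and> i < m \<and> j = l!i - 1)"
      using nbr_far[OF ab(1) _ _ g] ij ab L_def by auto
    then have ia: "i = a" and jj: "j = b-2 \<or> j = b-1" using ij ab L_def by auto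
    have jL: "j+3 \<le> L" using ij ia L_def by simp
    have nE: "\<not>(a = m-1 \<and> j+3 = L)" using ij ia L_def by simp
    have wa: "w = Vx a j" using ij ia by simp
    show "(w = Vx a (L-4) \<and> b = L-2) \<or> (w = Vx a (L-3) \<and> a \<noteq> m-1)"
    proof (cases "j + 3 = L")
      case True
      then have "j = L - 3" by arith
      then show ?thesis using wa nE True by auto
    next
      case False
      then have "j = L - 4" "b = L - 2" using jj jL ab by arith+
      then show ?thesis using wa by auto
    qed
  qed
  let ?f = "\<lambda>w. if w = Vx a (L-4) then Vx a (L-1) else Vx (m-1) (L'-1)"
  show ?thesis
  proof (rule CW_bound[OF vCW, where f="?f"])
    show "inj_on ?f ?Y"
    proof (rule inj_onI)
      fix x y assume x: "x \<in> ?Y" and y: "y \<in> ?Y" and e: "?f x = ?f y"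
      show "x = y" using Yf[OF x] Yf[OF y] e ab by (auto split: if_splits)
    qed
    show "?f ` ?Y \<subseteq> {w \<in> CW. key v < key w}"
    proof
      fix x assume "x \<in> ?f ` ?Y"
      then obtain w where w: "w \<in> ?Y" "x = ?f w" by blast
      from Yf[OF w(1)] show "x \<in> {w \<in> CW. key v < key w}"
      proof
        assume h: "w = Vx a (L-4) \<and> b = L-2"
        then have "x = Vx a (L-1)" using w by simp
        moreover have xb: "Vx a (L-1) \<in> B" using mem_B ab h L_def by auto
        moreover have "key (Vx a (L-1)) = (1,2,a)" using key_B[OF xb] ab L_def by auto
        ultimately show ?thesis using kv h ab CW_def by auto
      next
        assume h: "w = Vx a (L-3) \<and> a \<noteq> m-1"
        then have "x = Vx (m-1) (L'-1)" using w ab by auto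
        moreover have "a < m - 1" using h ab by auto
        ultimately show ?thesis using kv tB ktB ab CW_def by auto
      qed
    qed
  qed
qed

end



context TH2 begin

lemma main_big:
  assumes La: "k_assignment V k (L :: thv \<Rightarrow> 'c set)"
  shows "\<exists>f. equitable_L_coloring V G k L f"
proof (rule greedy_col[where key=key and part=part and T=T])
  show "finite V" by (rule finV)
  show "0 < k" using k8 by simp
  show "k_assignment V k L" by (rule La)
  show "inj_on key V" by (rule key_inj)
  show "\<And>x. \<not> G x x" by (rule sq_irr)
  show "\<And>v. v \<in> V \<Longrightarrow> part v < T" by (rule part_lt)
  show "T \<le> nat \<lceil>real (card V) / real k\<rceil>" by (simp add: T_def)
  fix v assume vV: "v \<in> V"
  consider "v \<in> MM" | "v \<in> CW" | "v \<in> CU" using classify[OF vV] by blast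
  then show "card {w\<in>V. key w < key v \<and> (G w v \<or> G v w \<or> part w = part v)} < k"
  proof cases
    case 1 then show ?thesis by (rule MM_count)
  next
    case 2
    have cls: "card {w\<in>V. part w = part v} \<le> k" using class_T2 part_CW[OF 2] by simp
    show ?thesis
    proof (rule core_count[OF vV cls])
      show "card {w\<in>V. key w < key v \<and> G v w \<and> part w \<noteq> part v} \<le> card {w\<in>V. part w = part v \<and> key v < key w}"
      proof (cases "v \<in> B")
        case True then show ?thesis by (rule count_B)
      next
        case False
        then have "v \<in> EE" using 2 CW_def by auto
        then have "hasE" "v = eV" by (auto simp: EE_def split: if_splits)
        then show ?thesis using count_E by simp
      qed
    qed
  next
    case 3
    have cls: "card {w\<in>V. part w = part v} \<le> k" using class_T1 part_CU[OF 3] by simp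
    show ?thesis
    proof (rule core_count[OF vV cls])
      consider "v \<in> A" | "v = U" | "v = W" using 3 CU_def by auto
      then show "card {w\<in>V. key w < key v \<and> G v w \<and> part w \<noteq> part v} \<le> card {w\<in>V. part w = part v \<and> key v < key w}"
      proof cases
        case 1 then show ?thesis by (rule count_A)
      next
        case 2 then show ?thesis using count_U by simp
      next
        case 3 then show ?thesis using count_W by simp
      qed
    qed
  qed
qed

end

context TH begin

lemma main_all:
  assumes La: "k_assignment V k (L :: thv \<Rightarrow> 'c set)"
  shows "\<exists>f. equitable_L_coloring V G k L f"
proof (cases "k < card V")
  case True
  interpret TH2 l k using True by unfold_locales
  show ?thesis using main_big[OF La] .
next
  case False
  have k8: "k \<ge> 8" using kb m3 by linarith
  have cV: "card V \<ge> 1" using finV memV(2) by (metis card_0_eq empty_iff less_one not_le)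
  show ?thesis
  proof (rule greedy_col[where key=key and part="\<lambda>_. 0" and T=1])
    show "finite V" by (rule finV)
    show "0 < k" using k8 by simp
    show "k_assignment V k L" by (rule La)
    show "inj_on key V" by (rule key_inj)
    show "\<And>x. \<not> G x x" by (rule sq_irr)
    show "\<And>v. v \<in> V \<Longrightarrow> (0::nat) < 1" by simp
    have "real (card V) / real k > 0" using cV k8 by simp
    then have "\<lceil>real (card V) / real k\<rceil> \<ge> 1" by linarith
    then show "1 \<le> nat \<lceil>real (card V) / real k\<rceil>" by linarith
    fix v assume vV: "v \<in> V"
    have "{w\<in>V. key w < key v \<and> (G w v \<or> G v w \<or> (0::nat) = 0)} \<subseteq> V - {v}" by auto
    then have "card {w\<in>V. key w < key v \<and> (G w v \<or> G v w \<or> (0::nat) = 0)} \<le> card (V - {v})"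
      by (intro card_mono) (use finV in auto)
    also have "\<dots> = card V - 1" using vV finV by simp
    finally show "card {w\<in>V. key w < key v \<and> (G w v \<or> G v w \<or> (0::nat) = 0)} < k" using False cV by linarith
  qed
qed

end

theorem lemma3p3:
  fixes l :: "nat list" and m :: nat
  assumes "m \<ge> 3" and "length l = m" and "sorted l"
    and "l ! 0 \<ge> 2" and "l ! 1 \<ge> 4"
  shows "\<forall>k \<ge> 2 * m + 2. \<forall>L :: thv \<Rightarrow> 'c set.
           k_assignment (theta_verts l) k L \<longrightarrow>
           (\<exists>f. equitable_L_coloring (theta_verts l) (graph_sq (theta_adj l)) k L f)"
proof (intro allI impI)
  fix k :: nat and L :: "thv \<Rightarrow> 'c set"
  assume k: "2 * m + 2 \<le> k" and La: "k_assignment (theta_verts l) k L"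
  interpret TH l k using assms k by unfold_locales auto
  show "\<exists>f. equitable_L_coloring (theta_verts l) (graph_sq (theta_adj l)) k L f"
    using main_all[OF La] .
qed



end
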